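(* Let $(X,\mathcal{Q},H)$ be a Diophantine space and let $K\subseteq X$ have the automorphism property. Suppose that for every $Q > 0$, the set $\{r\in\mathcal{Q} : H(r)\leq Q\}$ intersects each ball of $X$ in only finitely many points. Fix $(a,A)\in\mathbb{R}^2$, and suppose that $K$ is not uniformly $\kappa\Psi_{a,A}$-approximable for any $\kappa > 0$. Then the set $\{x\in X : x\text{ is not }\kappa\Psi_{a,A}\text{-approximable for any }\kappa > 0\}$ is comeager in $X$.
   Context: A Diophantine space is a triple $(X,\mathcal{Q},H)$ where $X$ is a complete metric space (with metric $\mathrm{dist}$), $\mathcal{Q}\subseteq X$ is a dense subset, and $H:\mathcal{Q}\to(0,\infty)$ (the height function). An automorphism of $(X,\mathcal{Q},H)$ is a bi-Lipschitz map $\Phi:X\to X$ with $\Phi(\mathcal{Q})=\mathcal{Q}$ such that there is a constant $C\geq 1$ with $C^{-1}H(r)\leq H(\Phi(r))\leq C H(r)$ for all $r\in\mathcal{Q}$. A set $K\subseteq X$ has the automorphism property if for every nonempty open $B\subseteq X$ there is an automorphism $\Phi$ with $\Phi(K)\subseteq B$. For a function $\Psi:(0,\infty)\times\mathbb{N}\to(0,\infty)$ and $Q_0\in\mathbb{N}$, a point $x\in X$ is $(\Psi,Q_0)$-approximable if for every integer $Q\geq Q_0$ there exists $r\in\mathcal{Q}$ with $H(r)\leq Q$ and $\mathrm{dist}(x,r)<\Psi(H(r),Q)$; $x$ is $\Psi$-approximable if it is $(\Psi,Q_0)$-approximable for some $Q_0$; a set $S$ is uniformly $\Psi$-approximable if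 there is a single $Q_0$ such that every point of $S$ is $(\Psi,Q_0)$-approximable. Here $\kappa\Psi_{a,A}(q,Q)=\kappa q^{-a}Q^{-A}$. *)

theory Defs
  imports "HOL-Analysis.Analysis"
begin

text \<open>The complete metric space X is the type 'a (class complete_space), so X = UNIV.
  A Diophantine space is given by a dense set Qs of "rationals" and a height function H,
  positive on Qs.\<close>

definition diophantine_space :: "('a::{metric_space,complete_space}) set \<Rightarrow> ('a \<Rightarrow> real) \<Rightarrow> bool" where
  "diophantine_space Qs H \<longleftrightarrow> closure Qs = UNIV \<and> (\<forall>r\<in>Qs. H r > 0)"

definition bi_lipschitz :: "('a::metric_space \<Rightarrow> 'a) \<Rightarrow> bool" where
  "bi_lipschitz \<Phi> \<longleftrightarrow> (\<exists>L\<ge>1. \<forall>x y. dist x y \<le> L * dist (\<Phi> x) (\<Phi> y) \<and> dist (\<Phi> x) (\<Phi> y) \<le> L * dist x y)"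

definition automorphism :: "'a::metric_space set \<Rightarrow> ('a \<Rightarrow> real) \<Rightarrow> ('a \<Rightarrow> 'a) \<Rightarrow> bool" where
  "automorphism Qs H \<Phi> \<longleftrightarrow> bi_lipschitz \<Phi> \<and> \<Phi> ` Qs = Qs \<and>
     (\<exists>C\<ge>1. \<forall>r\<in>Qs. H r / C \<le> H (\<Phi> r) \<and> H (\<Phi> r) \<le> C * H r)"

definition automorphism_property :: "'a::metric_space set \<Rightarrow> ('a \<Rightarrow> real) \<Rightarrow> 'a set \<Rightarrow> bool" where
  "automorphism_property Qs H K \<longleftrightarrow>
     (\<forall>B. open B \<and> B \<noteq> {} \<longrightarrow> (\<exists>\<Phi>. automorphism Qs H \<Phi> \<and> \<Phi> ` K \<subseteq> B))"

definition approx_from :: "'a::metric_space set \<Rightarrow> ('a \<Rightarrow> real) \<Rightarrow> (real \<Rightarrow> nat \<Rightarrow> real) \<Rightarrow> nat \<Rightarrow> 'a \<Rightarrow> bool" where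
  "approx_from Qs H \<Psi> Q0 x \<longleftrightarrow>
     (\<forall>Q::nat. Q \<ge> Q0 \<longrightarrow> (\<exists>r\<in>Qs. H r \<le> real Q \<and> dist x r < \<Psi> (H r) Q))"

definition approximable :: "'a::metric_space set \<Rightarrow> ('a \<Rightarrow> real) \<Rightarrow> (real \<Rightarrow> nat \<Rightarrow> real) \<Rightarrow> 'a \<Rightarrow> bool" where
  "approximable Qs H \<Psi> x \<longleftrightarrow> (\<exists>Q0. approx_from Qs H \<Psi> Q0 x)"

definition uniformly_approximable :: "'a::metric_space set \<Rightarrow> ('a \<Rightarrow> real) \<Rightarrow> (real \<Rightarrow> nat \<Rightarrow> real) \<Rightarrow> 'a set \<Rightarrow> bool" where
  "uniformly_approximable Qs H \<Psi> S \<longleftrightarrow> (\<exists>Q0. \<forall>x\<in>S. approx_from Qs H \<Psi> Q0 x)"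

definition Psi :: "real \<Rightarrow> real \<Rightarrow> real \<Rightarrow> nat \<Rightarrow> real" where
  "Psi a A q Q = q powr (-a) * (real Q) powr (-A)"

definition comeager :: "'a::topological_space set \<Rightarrow> bool" where
  "comeager S \<longleftrightarrow> (\<exists>F::nat \<Rightarrow> 'a set. (\<forall>n. open (F n) \<and> closure (F n) = UNIV) \<and> (\<Inter>n. F n) \<subseteq> S)"

end

theory Submission
  imports Defs
begin

lemma powr_ratio:
  fixes u v k a :: real
  assumes "u > 0" "v > 0" "k \<ge> 1" "u / k \<le> v" "v \<le> k * u"
  shows "v powr (-a) \<le> k powr \<bar>a\<bar> * u powr (-a)"
proof -
  have k0: "k > 0" using assms by simp
  have "u \<le> k * v" using assms k0 by (simp add: field_simps)
  hence "ln u \<le> ln (k * v)" using assms k0 by simp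
  hence l1: "ln u \<le> ln k + ln v" using assms k0 by (simp add: ln_mult)
  have "ln v \<le> ln (k * u)" using assms k0 by simp
  hence l2: "ln v \<le> ln k + ln u" using assms k0 by (simp add: ln_mult)
  have d: "\<bar>ln v - ln u\<bar> \<le> ln k" using l1 l2 by linarith
  have "-a * (ln v - ln u) \<le> \<bar>-a * (ln v - ln u)\<bar>" by (rule abs_ge_self)
  also have "\<dots> = \<bar>a\<bar> * \<bar>ln v - ln u\<bar>" by (simp add: abs_mult)
  also have "\<dots> \<le> \<bar>a\<bar> * ln k" using d by (simp add: mult_left_mono)
  finally have "-a * ln v \<le> \<bar>a\<bar> * ln k + -a * ln u" by (simp add: algebra_simps)
  hence "exp (-a * ln v) \<le> exp (\<bar>a\<bar> * ln k + -a * ln u)" by simp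
  also have "exp (\<bar>a\<bar> * ln k + -a * ln u) = exp (\<bar>a\<bar> * ln k) * exp (-a * ln u)" by (rule exp_add)
  finally show ?thesis using assms k0 by (simp add: powr_def mult.commute)
qed

lemma key:
  fixes Qs :: "('a::{metric_space,complete_space}) set" and H :: "'a \<Rightarrow> real"
    and K :: "'a set" and a A :: real
  assumes dio: "diophantine_space Qs H"
    and aut: "automorphism_property Qs H K"
    and fin: "\<And>Q x e. Q > 0 \<Longrightarrow> finite ({r\<in>Qs. H r \<le> Q} \<inter> ball x e)"
    and nu: "\<And>\<kappa>. \<kappa> > 0 \<Longrightarrow> \<not> uniformly_approximable Qs H (\<lambda>q Q. \<kappa> * Psi a A q Q) K"
    and U: "open U" "U \<noteq> {}"
  shows "\<exists>V. open V \<and> V \<noteq> {} \<and> V \<subseteq> U \<and>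
     V \<inter> {x. approx_from Qs H (\<lambda>q Q. real m * Psi a A q Q) (Suc n) x} = {}"
proof -
  have Hpos: "\<And>r. r \<in> Qs \<Longrightarrow> H r > 0" using dio by (auto simp: diophantine_space_def)
  obtain \<Phi> where aP: "automorphism Qs H \<Phi>" and PK: "\<Phi> ` K \<subseteq> U"
    using aut U unfolding automorphism_property_def by blast
  have bl: "bi_lipschitz \<Phi>" and PQ: "\<Phi> ` Qs = Qs"
    and exC: "\<exists>C\<ge>1. \<forall>r\<in>Qs. H r / C \<le> H (\<Phi> r) \<and> H (\<Phi> r) \<le> C * H r"
    using aP unfolding automorphism_def by simp_all
  obtain L where L1: "L \<ge> 1" and lip0: "\<forall>x y. dist x y \<le> L * dist (\<Phi> x) (\<Phi> y) \<and> dist (\<Phi> x) (\<Phi> y) \<le> L * dist x y"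
    using bl unfolding bi_lipschitz_def by blast
  have lip: "\<And>x y. dist x y \<le> L * dist (\<Phi> x) (\<Phi> y)" using lip0 by simp
  obtain C where C1: "C \<ge> 1" and Hb0: "\<forall>r\<in>Qs. H r / C \<le> H (\<Phi> r) \<and> H (\<Phi> r) \<le> C * H r"
    using exC by blast
  have Hb: "\<And>r. r \<in> Qs \<Longrightarrow> H r / C \<le> H (\<Phi> r) \<and> H (\<Phi> r) \<le> C * H r" using Hb0 by simp
  define c where "c = nat \<lceil>C\<rceil>"
  have cC: "real c \<ge> C" unfolding c_def by linarith
  have c1: "c \<ge> 1" using cC C1 by linarith
  define M where "M = C powr \<bar>a\<bar> * (2 * real c) powr \<bar>A\<bar>"
  have M0: "M > 0" using C1 c1 unfolding M_def by simp
  define \<kappa> where "\<kappa> = 2 * real m * L * M + 1"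
  have \<kappa>0: "\<kappa> > 0" proof -
    have "0 \<le> 2 * real m * L * M" using L1 M0 by simp
    thus ?thesis unfolding \<kappa>_def by linarith
  qed
  have \<kappa>ge: "\<kappa> \<ge> 2 * real m * L * M" unfolding \<kappa>_def by simp
  have "\<not> (\<forall>x\<in>K. approx_from Qs H (\<lambda>q Q. \<kappa> * Psi a A q Q) (c * Suc n) x)"
    using nu[OF \<kappa>0] unfolding uniformly_approximable_def by blast
  then obtain x Q2 where xK: "x \<in> K" and Q2: "Q2 \<ge> c * Suc n"
    and fail: "\<And>r. r \<in> Qs \<Longrightarrow> H r \<le> real Q2 \<Longrightarrow> dist x r \<ge> \<kappa> * Psi a A (H r) Q2"
    unfolding approx_from_def by (auto simp: not_less)
  define Q where "Q = Q2 div c"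
  have c0: "c > 0" using c1 by simp
  have Qn: "Q \<ge> Suc n" unfolding Q_def using Q2 c0
    by (simp add: less_eq_div_iff_mult_less_eq mult.commute)
  have Qdec: "Q2 = c * Q + Q2 mod c" unfolding Q_def by simp
  have modlt: "Q2 mod c < c" using c0 by simp
  have cQ: "c * Q \<le> Q2" using Qdec by linarith
  have cQc: "c \<le> c * Q" using Qn by simp
  have Q2le: "Q2 \<le> 2 * c * Q" using Qdec modlt cQc by linarith
  have Qr: "real Q \<ge> 1" using Qn by simp
  have cQr: "real c * real Q \<le> real Q2" using cQ by (metis of_nat_le_iff of_nat_mult)
  have Q2r: "real Q2 \<le> 2 * real c * real Q" using Q2le by (metis of_nat_le_iff of_nat_mult of_nat_numeral)
  have Q2pos: "real Q2 > 0" using cQr Qr c1 by (smt (verit) mult_le_cancel_left1 of_nat_le_iff of_nat_1)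
  define y where "y = \<Phi> x"
  have yU: "y \<in> U" using PK xK y_def by blast
  have claim: "dist y r' \<ge> 2 * real m * Psi a A (H r') Q \<and> dist y r' > 0"
    if r': "r' \<in> Qs" "H r' \<le> real Q" for r'
  proof -
    obtain r where r: "r \<in> Qs" "r' = \<Phi> r" using r' PQ by blast
    have hr: "H r > 0" "H r' > 0" using Hpos r r' by auto
    have b1: "H r / C \<le> H r'" "H r' \<le> C * H r" using Hb[OF r(1)] r by auto
    have "H r \<le> C * H r'" using b1 C1 by (simp add: field_simps)
    also have "\<dots> \<le> real c * real Q" using C1 cC r' hr
      by (meson mult_mono less_imp_le order.trans order_trans zero_le_one)
    finally have hrQ: "H r \<le> real Q2" using cQr by linarith
    have d1: "dist x r \<ge> \<kappa> * Psi a A (H r) Q2" using fail r hrQ by blast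
    have d2: "dist x r \<le> L * dist y r'" using lip r y_def by simp
    have p1: "H r' powr (-a) \<le> C powr \<bar>a\<bar> * H r powr (-a)"
      using powr_ratio[OF hr(1) hr(2) C1 b1] .
    have p2: "real Q powr (-A) \<le> (2 * real c) powr \<bar>A\<bar> * real Q2 powr (-A)"
    proof (rule powr_ratio)
      show "real Q2 / (2 * real c) \<le> real Q" using Q2r c1 by (simp add: field_simps)
      show "real Q \<le> 2 * real c * real Q2" using cQr c1 Qr
        by (smt (verit) mult_le_cancel_right1 of_nat_0_le_iff of_nat_1 of_nat_le_iff mult_nonneg_nonneg)
    qed (use Q2pos Qr c1 in auto)
    have Psi': "Psi a A (H r') Q \<le> M * Psi a A (H r) Q2"
    proof -
      have "Psi a A (H r') Q = H r' powr (-a) * real Q powr (-A)" by (simp add: Psi_def)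
      also have "\<dots> \<le> (C powr \<bar>a\<bar> * H r powr (-a)) * ((2 * real c) powr \<bar>A\<bar> * real Q2 powr (-A))"
        by (rule mult_mono[OF p1 p2]) auto
      also have "\<dots> = M * Psi a A (H r) Q2" by (simp add: M_def Psi_def mult_ac)
      finally show ?thesis .
    qed
    have Ppos: "Psi a A (H r) Q2 > 0" using hr Q2pos by (simp add: Psi_def)
    have "2 * real m * L * Psi a A (H r') Q \<le> 2 * real m * L * (M * Psi a A (H r) Q2)"
      using Psi' L1 by (simp add: mult_left_mono)
    also have "\<dots> = (2 * real m * L * M) * Psi a A (H r) Q2" by simp
    also have "\<dots> \<le> \<kappa> * Psi a A (H r) Q2" using \<kappa>ge Ppos by (simp add: mult_right_mono)
    finally have "L * (2 * real m * Psi a A (H r') Q) \<le> L * dist y r'" using d1 d2 by (simp add: mult_ac)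
    hence A1: "2 * real m * Psi a A (H r') Q \<le> dist y r'" using L1 by simp
    have "0 < \<kappa> * Psi a A (H r) Q2" using \<kappa>0 Ppos by simp
    hence "0 < L * dist y r'" using d1 d2 by linarith
    hence "dist y r' > 0" using L1 by (simp add: zero_less_mult_iff)
    thus ?thesis using A1 by simp
  qed
  define F where "F = {r\<in>Qs. H r \<le> real Q} \<inter> ball y 1"
  have fF: "finite F" unfolding F_def using fin Qr by simp
  have yF: "y \<notin> F" using claim unfolding F_def by fastforce
  have "open (- F)" using finite_imp_closed[OF fF] by (simp add: open_Compl)
  then obtain e where e: "e > 0" "ball y e \<subseteq> - F" using yF open_contains_ball by blast
  obtain e2 where e2: "e2 > 0" "ball y e2 \<subseteq> U" using U yU open_contains_ball by blast
  define \<delta> where "\<delta> = min (min e 1) e2 / 2"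
  have \<delta>0: "\<delta> > 0" using e e2 \<delta>_def by simp
  have far: "dist y r' \<ge> 2 * \<delta>" if "r' \<in> Qs" "H r' \<le> real Q" for r'
  proof (rule ccontr)
    assume "\<not> ?thesis"
    hence "dist y r' < min e 1" unfolding \<delta>_def by linarith
    hence "r' \<in> F" "r' \<in> ball y e" using that unfolding F_def by auto
    thus False using e by blast
  qed
  have "ball y \<delta> \<subseteq> U" using e2 \<delta>_def by auto
  moreover have "ball y \<delta> \<inter> {x. approx_from Qs H (\<lambda>q Q. real m * Psi a A q Q) (Suc n) x} = {}"
  proof (rule ccontr)
    assume "\<not> ?thesis"
    then obtain z where z: "dist y z < \<delta>" "approx_from Qs H (\<lambda>q Q. real m * Psi a A q Q) (Suc n) z"
      by auto
    then obtain r' where r': "r' \<in> Qs" "H r' \<le> real Q" "dist z r' < real m * Psi a A (H r') Q"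
      using Qn unfolding approx_from_def by blast
    have "dist y r' \<le> dist y z + dist z r'" by (rule dist_triangle)
    moreover have "dist y r' \<ge> 2 * \<delta>" using far r' by blast
    moreover have "dist y r' \<ge> 2 * real m * Psi a A (H r') Q" using claim r' by blast
    ultimately show False using z r' by linarith
  qed
  ultimately show ?thesis using \<delta>0 by (intro exI[of _ "ball y \<delta>"]) auto
qed

theorem proposition1:
  fixes Qs :: "('a::{metric_space,complete_space}) set" and H :: "'a \<Rightarrow> real"
    and K :: "'a set" and a A :: real
  assumes "diophantine_space Qs H"
    and "automorphism_property Qs H K"
    and "\<And>Q x e. Q > 0 \<Longrightarrow> finite ({r\<in>Qs. H r \<le> Q} \<inter> ball x e)"
    and "\<And>\<kappa>. \<kappa> > 0 \<Longrightarrow> \<not> uniformly_approximable Qs H (\<lambda>q Q. \<kappa> * Psi a A q Q) K"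
  shows "comeager {x. \<forall>\<kappa>>0. \<not> approximable Qs H (\<lambda>q Q. \<kappa> * Psi a A q Q) x}"
proof -
  define E where "E = (\<lambda>m n. {x. approx_from Qs H (\<lambda>q Q. real m * Psi a A q Q) (Suc n) x})"
  define F where "F = (\<lambda>k. - closure (case prod_decode k of (m, n) \<Rightarrow> E m n))"
  have Fo: "open (F k)" for k unfolding F_def by auto
  have Fd: "closure (F k) = UNIV" for k
  proof (rule ccontr)
    obtain m n where mn: "prod_decode k = (m, n)" by fastforce
    assume "closure (F k) \<noteq> UNIV"
    then obtain p where p: "p \<notin> closure (F k)" by blast
    have o: "open (- closure (F k))" by auto
    have ne: "- closure (F k) \<noteq> {}" using p by blast
    have "\<exists>V. open V \<and> V \<noteq> {} \<and> V \<subseteq> - closure (F k) \<and> V \<inter> E m n = {}"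
      unfolding E_def by (rule key[OF assms o ne])
    then obtain V where V: "open V" "V \<noteq> {}" "V \<subseteq> - closure (F k)" "V \<inter> E m n = {}"
      by blast
    have "V \<inter> closure (E m n) = {}" using V open_Int_closure_eq_empty by blast
    moreover have "F k = - closure (E m n)" unfolding F_def using mn by simp
    ultimately have "V \<subseteq> F k" by blast
    hence "V \<subseteq> closure (F k)" using closure_subset by blast
    thus False using V by blast
  qed
  have "(\<Inter>k. F k) \<subseteq> {x. \<forall>\<kappa>>0. \<not> approximable Qs H (\<lambda>q Q. \<kappa> * Psi a A q Q) x}"
  proof (rule subsetI, rule CollectI, intro allI impI notI)
    fix x and \<kappa> :: real
    assume xF: "x \<in> (\<Inter>k. F k)" and k0: "\<kappa> > 0"
      and ap: "approximable Qs H (\<lambda>q Q. \<kappa> * Psi a A q Q) x"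
    then obtain Q0 where Q0: "approx_from Qs H (\<lambda>q Q. \<kappa> * Psi a A q Q) Q0 x"
      unfolding approximable_def by blast
    define m where "m = nat \<lceil>\<kappa>\<rceil>"
    have mk: "real m \<ge> \<kappa>" unfolding m_def by linarith
    have "x \<in> E m Q0" unfolding E_def approx_from_def
    proof (safe)
      fix Q :: nat assume "Suc Q0 \<le> Q"
      hence "Q0 \<le> Q" by simp
      then obtain r where r: "r \<in> Qs" "H r \<le> real Q" "dist x r < \<kappa> * Psi a A (H r) Q"
        using Q0 unfolding approx_from_def by auto
      have "Psi a A (H r) Q \<ge> 0" by (simp add: Psi_def)
      hence "\<kappa> * Psi a A (H r) Q \<le> real m * Psi a A (H r) Q" using mk by (simp add: mult_right_mono)
      thus "\<exists>r\<in>Qs. H r \<le> real Q \<and> dist x r < real m * Psi a A (H r) Q" using r by (intro bexI[of _ r]) auto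
    qed
    hence c1: "x \<in> closure (E m Q0)" by (rule closure_subset[THEN subsetD])
    have "x \<in> F (prod_encode (m, Q0))" using xF by blast
    hence "x \<notin> closure (E m Q0)" unfolding F_def by simp
    thus False using c1 by blast
  qed
  thus ?thesis unfolding comeager_def using Fo Fd by (intro exI[of _ F]) simp
qed

end
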